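(* Let $X$ be an $X$-set parameter and let $G$ be a graph with no isolated vertices. Then the automorphism group of $\mathscr{X}^{\rm TAR}(G)$ is generated by $\{\nu_R : R\subseteq V(G)\text{ is }X\text{-irrelevant}\}\cup M_X(G)$, where each $\psi\in M_X(G)$ is regarded as the map $S\mapsto\psi(S)=\{\psi(s):s\in S\}$ on $X$-sets.
   Context: All graphs are simple, finite, with nonempty vertex set. An $X$-set parameter is a graph parameter $X(G)$ defined as the minimum cardinality of an $X$-set of $G$, where the $X$-sets of each graph are subsets of its vertex set determined by some property satisfying: (1) supersets (within $V(G)$) of $X$-sets are $X$-sets; (2) the empty set is never an $X$-set; (3) an $X$-set of a disconnected graph is the union of an $X$-set of each component; (4) if $G$ has no isolated vertices, every set of $|V(G)|-1$ vertices is an $X$-set. The $X$-TAR graph $\mathscr{X}^{\rm TAR}(G)$ has as vertices all $X$-sets of $G$, with $S_1,S_2$ adjacent iff $|S_1\ominus S_2|=1$ (symmetric difference). A vertex $v$ is $X$-irrelevant if $v\notin S$ for every minimal $X$-set $S$ of $G$; a set is $X$-irrelevant if all its vertices are. For $R\subseteq V(G)$, $\nu_R(S)=S\ominus R$. $M_X(G)$ is the set of bijections $\psi:V(G)\to V(G)$ that send minimal $X$-sets of $G$ to minimal $X$-sets of $G$ of the same size. *)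

theory Defs
  imports Main "HOL-Algebra.Bij" "HOL-Algebra.Generated_Groups"
begin

definition is_graph :: "'a set \<Rightarrow> ('a \<Rightarrow> 'a \<Rightarrow> bool) \<Rightarrow> bool" where
  "is_graph V E \<longleftrightarrow> finite V \<and> V \<noteq> {} \<and>
     (\<forall>u v. E u v \<longrightarrow> u \<in> V \<and> v \<in> V) \<and>
     (\<forall>u v. E u v \<longrightarrow> E v u) \<and> (\<forall>v. \<not> E v v)"

definition no_isolated :: "'a set \<Rightarrow> ('a \<Rightarrow> 'a \<Rightarrow> bool) \<Rightarrow> bool" where
  "no_isolated V E \<longleftrightarrow> (\<forall>v\<in>V. \<exists>u. E v u)"

definition induced :: "('a \<Rightarrow> 'a \<Rightarrow> bool) \<Rightarrow> 'a set \<Rightarrow> 'a \<Rightarrow> 'a \<Rightarrow> bool" where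
  "induced E C = (\<lambda>u v. E u v \<and> u \<in> C \<and> v \<in> C)"

definition component :: "'a set \<Rightarrow> ('a \<Rightarrow> 'a \<Rightarrow> bool) \<Rightarrow> 'a \<Rightarrow> 'a set" where
  "component V E v = {u \<in> V. (induced E V)\<^sup>*\<^sup>* v u}"

definition components :: "'a set \<Rightarrow> ('a \<Rightarrow> 'a \<Rightarrow> bool) \<Rightarrow> 'a set set" where
  "components V E = component V E ` V"

definition disconnected :: "'a set \<Rightarrow> ('a \<Rightarrow> 'a \<Rightarrow> bool) \<Rightarrow> bool" where
  "disconnected V E \<longleftrightarrow> (\<exists>C\<in>components V E. \<exists>D\<in>components V E. C \<noteq> D)"

definition X_set_property :: "('a set \<Rightarrow> ('a \<Rightarrow> 'a \<Rightarrow> bool) \<Rightarrow> 'a set set) \<Rightarrow> bool" where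
  "X_set_property Xs \<longleftrightarrow>
     (\<forall>V E. is_graph V E \<longrightarrow>
        (\<forall>S \<in> Xs V E. S \<subseteq> V) \<and>
        (\<forall>S T. S \<in> Xs V E \<longrightarrow> S \<subseteq> T \<longrightarrow> T \<subseteq> V \<longrightarrow> T \<in> Xs V E) \<and>
        {} \<notin> Xs V E \<and>
        (disconnected V E \<longrightarrow>
           (\<forall>S. S \<in> Xs V E \<longleftrightarrow>
                 (\<exists>f. (\<forall>C\<in>components V E. f C \<in> Xs C (induced E C))
                      \<and> S = (\<Union>C\<in>components V E. f C)))) \<and>
        (no_isolated V E \<longrightarrow> (\<forall>v\<in>V. V - {v} \<in> Xs V E)))"

definition sym_diff :: "'a set \<Rightarrow> 'a set \<Rightarrow> 'a set" (infixl "\<ominus>" 70) where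
  "A \<ominus> B = (A - B) \<union> (B - A)"

(* The X-TAR graph: vertex set Xs V E, adjacency |S1 \<ominus> S2| = 1 *)
definition TAR_adj :: "'a set \<Rightarrow> 'a set \<Rightarrow> bool" where
  "TAR_adj S1 S2 \<longleftrightarrow> card (S1 \<ominus> S2) = 1"

definition TAR_auts :: "'a set set \<Rightarrow> ('a set \<Rightarrow> 'a set) set" where
  "TAR_auts W = {f \<in> Bij W. \<forall>S1\<in>W. \<forall>S2\<in>W. TAR_adj (f S1) (f S2) \<longleftrightarrow> TAR_adj S1 S2}"

definition minimal_Xset :: "('a set \<Rightarrow> ('a \<Rightarrow> 'a \<Rightarrow> bool) \<Rightarrow> 'a set set) \<Rightarrow> 'a set \<Rightarrow> ('a \<Rightarrow> 'a \<Rightarrow> bool) \<Rightarrow> 'a set \<Rightarrow> bool" where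
  "minimal_Xset Xs V E S \<longleftrightarrow> S \<in> Xs V E \<and> (\<forall>T. T \<subset> S \<longrightarrow> T \<notin> Xs V E)"

definition X_irrelevant :: "('a set \<Rightarrow> ('a \<Rightarrow> 'a \<Rightarrow> bool) \<Rightarrow> 'a set set) \<Rightarrow> 'a set \<Rightarrow> ('a \<Rightarrow> 'a \<Rightarrow> bool) \<Rightarrow> 'a set \<Rightarrow> bool" where
  "X_irrelevant Xs V E R \<longleftrightarrow> R \<subseteq> V \<and> (\<forall>v\<in>R. \<forall>S. minimal_Xset Xs V E S \<longrightarrow> v \<notin> S)"

definition M_X :: "('a set \<Rightarrow> ('a \<Rightarrow> 'a \<Rightarrow> bool) \<Rightarrow> 'a set set) \<Rightarrow> 'a set \<Rightarrow> ('a \<Rightarrow> 'a \<Rightarrow> bool) \<Rightarrow> ('a \<Rightarrow> 'a) set" where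
  "M_X Xs V E = {\<psi>. bij_betw \<psi> V V \<and>
     (\<forall>S. minimal_Xset Xs V E S \<longrightarrow> minimal_Xset Xs V E (\<psi> ` S) \<and> card (\<psi> ` S) = card S)}"

definition TAR_generators :: "('a set \<Rightarrow> ('a \<Rightarrow> 'a \<Rightarrow> bool) \<Rightarrow> 'a set set) \<Rightarrow> 'a set \<Rightarrow> ('a \<Rightarrow> 'a \<Rightarrow> bool) \<Rightarrow> ('a set \<Rightarrow> 'a set) set" where
  "TAR_generators Xs V E =
     {(\<lambda>S\<in>Xs V E. S \<ominus> R) | R. X_irrelevant Xs V E R} \<union>
     {(\<lambda>S\<in>Xs V E. \<psi> ` S) | \<psi>. \<psi> \<in> M_X Xs V E}"

end

theory Submission
  imports Defs
begin

lemma sd_simp: "x \<in> A \<ominus> B \<longleftrightarrow> (x \<in> A) \<noteq> (x \<in> B)"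
  by (auto simp: sym_diff_def)

inductive walk :: "'a set set \<Rightarrow> nat \<Rightarrow> 'a set \<Rightarrow> 'a set \<Rightarrow> bool" for W where
  w0: "S \<in> W \<Longrightarrow> walk W 0 S S"
| wS: "walk W k S T \<Longrightarrow> U \<in> W \<Longrightarrow> TAR_adj T U \<Longrightarrow> walk W (Suc k) S U"

lemma walk_mem: "walk W k S T \<Longrightarrow> S \<in> W \<and> T \<in> W"
  by (induction rule: walk.induct) auto

lemma walk_map:
  assumes "\<And>S. S \<in> W \<Longrightarrow> h S \<in> W"
    and "\<And>S T. S \<in> W \<Longrightarrow> T \<in> W \<Longrightarrow> TAR_adj S T \<Longrightarrow> TAR_adj (h S) (h T)"
  shows "walk W k S T \<Longrightarrow> walk W k (h S) (h T)"
proof (induction rule: walk.induct)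
  case (w0 S) then show ?case using assms by (auto intro: walk.w0)
next
  case (wS k S T U)
  then show ?case using assms walk_mem[OF wS.hyps(1)] by (auto intro: walk.wS)
qed

locale upfam =
  fixes V :: "'a set" and F :: "'a set set"
  assumes finV: "finite V" and sub: "\<And>S. S \<in> F \<Longrightarrow> S \<subseteq> V"
    and up: "\<And>S T. S \<in> F \<Longrightarrow> S \<subseteq> T \<Longrightarrow> T \<subseteq> V \<Longrightarrow> T \<in> F"
    and top: "\<And>v. v \<in> V \<Longrightarrow> V - {v} \<in> F"
    and ne: "V \<noteq> {}"
begin

lemma V_in: "V \<in> F"
proof -
  obtain v where "v \<in> V" using ne by auto
  then show ?thesis using top[of v] up[of "V - {v}" V] by auto
qed

lemma finF: "finite F"
  by (rule finite_subset[of F "Pow V"]) (use sub finV in auto)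

lemma fin_mem: "S \<in> F \<Longrightarrow> finite S"
  using sub finV finite_subset by blast

lemma walk_card: "walk F k S T \<Longrightarrow> card (S \<ominus> T) \<le> k"
proof (induction rule: walk.induct)
  case (w0 S) then show ?case by (simp add: sym_diff_def)
next
  case (wS k S T U)
  have m: "S \<in> F" "T \<in> F" "U \<in> F" using walk_mem[OF wS.hyps(1)] wS.hyps by auto
  have fin: "finite (S \<ominus> T)" "finite (T \<ominus> U)"
    using m fin_mem by (auto simp: sym_diff_def)
  have "card (S \<ominus> U) \<le> card ((S \<ominus> T) \<union> (T \<ominus> U))"
    by (rule card_mono) (use fin in \<open>auto simp: sym_diff_def\<close>)
  also have "\<dots> \<le> card (S \<ominus> T) + card (T \<ominus> U)" by (rule card_Un_le)
  finally show ?case using wS.IH wS.hyps(3) by (simp add: TAR_adj_def)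
qed

lemma walk_up: "finite A \<Longrightarrow> S \<in> F \<Longrightarrow> A \<subseteq> V \<Longrightarrow> A \<inter> S = {} \<Longrightarrow> walk F (card A) S (S \<union> A)"
proof (induction A rule: finite_induct)
  case empty then show ?case by (auto intro: walk.w0)
next
  case (insert x A)
  have "walk F (card A) S (S \<union> A)" using insert by auto
  moreover have "S \<union> insert x A \<in> F" by (rule up[of S]) (use insert sub in auto)
  moreover have "(S \<union> A) \<ominus> (S \<union> insert x A) = {x}" using insert by (auto simp: sym_diff_def)
  ultimately have "walk F (Suc (card A)) S (S \<union> insert x A)"
    using walk.wS[of F "card A" S "S \<union> A" "S \<union> insert x A"] by (simp add: TAR_adj_def)
  then show ?case using insert by simp
qed

lemma walk_down: "finite A \<Longrightarrow> T \<in> F \<Longrightarrow> A \<subseteq> V \<Longrightarrow> A \<inter> T = {} \<Longrightarrow> walk F k S (T \<union> A) \<Longrightarrow> walk F (k + card A) S T"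
proof (induction A arbitrary: k rule: finite_induct)
  case empty then show ?case by auto
next
  case (insert x A)
  have "T \<union> A \<in> F" by (rule up[of T]) (use insert sub in auto)
  moreover have "(T \<union> insert x A) \<ominus> (T \<union> A) = {x}" using insert by (auto simp: sym_diff_def)
  ultimately have "walk F (Suc k) S (T \<union> A)"
    using walk.wS[OF insert.prems(4)] by (simp add: TAR_adj_def)
  then have "walk F (Suc k + card A) S T"
    using insert.IH[of "Suc k"] insert.prems(1,2,3) by blast
  then show ?case using insert by simp
qed

lemma walk_dist: assumes "S \<in> F" "T \<in> F" shows "walk F (card (S \<ominus> T)) S T"
proof -
  have fS: "finite S" "finite T" using assms fin_mem by auto
  have "walk F (card (T - S)) S (S \<union> (T - S))"
    using assms sub fS by (intro walk_up) auto
  moreover have "S \<union> (T - S) = T \<union> (S - T)" by auto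
  ultimately have "walk F (card (T - S) + card (S - T)) S T"
    using assms sub fS by (intro walk_down) auto
  moreover have "card (S \<ominus> T) = card (S - T) + card (T - S)"
    unfolding sym_diff_def using fS by (intro card_Un_disjoint) auto
  ultimately show ?thesis by (simp add: add.commute)
qed

lemma aut_dist:
  assumes f: "f \<in> TAR_auts F" and S: "S \<in> F" and T: "T \<in> F"
  shows "card (f S \<ominus> f T) = card (S \<ominus> T)"
proof -
  have fB: "f \<in> Bij F" using f unfolding TAR_auts_def by blast
  then have bij: "bij_betw f F F" by (simp add: Bij_def)
  have adj: "\<And>S1 S2. S1 \<in> F \<Longrightarrow> S2 \<in> F \<Longrightarrow> TAR_adj (f S1) (f S2) = TAR_adj S1 S2"
    using f unfolding TAR_auts_def by blast
  have fF: "\<And>S. S \<in> F \<Longrightarrow> f S \<in> F" by (rule bij_betw_apply[OF bij])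
  define g where "g = inv_into F f"
  have gF: "\<And>S. S \<in> F \<Longrightarrow> g S \<in> F" unfolding g_def
    by (rule bij_betw_apply[OF bij_betw_inv_into[OF bij]])
  have fg: "\<And>S. S \<in> F \<Longrightarrow> f (g S) = S" unfolding g_def
    by (rule bij_betw_inv_into_right[OF bij])
  have gf: "\<And>S. S \<in> F \<Longrightarrow> g (f S) = S" unfolding g_def
    by (rule bij_betw_inv_into_left[OF bij])
  have gadj: "TAR_adj (g S1) (g S2)" if "S1 \<in> F" "S2 \<in> F" "TAR_adj S1 S2" for S1 S2
  proof -
    have "TAR_adj (f (g S1)) (f (g S2))" using fg that by simp
    then show ?thesis using adj[OF gF gF] that by simp
  qed
  have fadj: "TAR_adj (f S1) (f S2)" if "S1 \<in> F" "S2 \<in> F" "TAR_adj S1 S2" for S1 S2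
    using adj that by simp
  have "walk F (card (S \<ominus> T)) (f S) (f T)"
    by (rule walk_map[where W=F and h=f, OF fF fadj walk_dist[OF S T]])
  then have 1: "card (f S \<ominus> f T) \<le> card (S \<ominus> T)" by (rule walk_card)
  have "walk F (card (f S \<ominus> f T)) (g (f S)) (g (f T))"
    by (rule walk_map[where W=F and h=g, OF gF gadj walk_dist[OF fF[OF S] fF[OF T]]])
  then have "card (g (f S) \<ominus> g (f T)) \<le> card (f S \<ominus> f T)" by (rule walk_card)
  then have "card (S \<ominus> T) \<le> card (f S \<ominus> f T)" using gf S T by simp
  with 1 show ?thesis by simp
qed

end

lemma card_sd_single: "finite D \<Longrightarrow> card (D \<ominus> {w}) = (if w \<in> D then card D - 1 else Suc (card D))"
proof -
  assume "finite D"
  show ?thesis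
  proof (cases "w \<in> D")
    case True
    then have "D \<ominus> {w} = D - {w}" by (auto simp: sym_diff_def)
    then show ?thesis using True \<open>finite D\<close> by simp
  next
    case False
    then have "D \<ominus> {w} = insert w D" by (auto simp: sym_diff_def)
    then show ?thesis using False \<open>finite D\<close> by simp
  qed
qed

lemma sd_cancel: "B \<ominus> (A \<ominus> B) = A"
  by (auto simp: sym_diff_def)

context upfam begin

lemma aut_form:
  assumes f: "f \<in> TAR_auts F"
  shows "\<exists>\<psi> R. bij_betw \<psi> V V \<and> R \<subseteq> V \<and> (\<forall>S\<in>F. f S = \<psi> ` S \<ominus> R)"
proof -
  have fB: "f \<in> Bij F" using f unfolding TAR_auts_def by blast
  then have bij: "bij_betw f F F" by (simp add: Bij_def)
  have fF: "\<And>S. S \<in> F \<Longrightarrow> f S \<in> F" by (rule bij_betw_apply[OF bij])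
  define T0 where "T0 = f V"
  have T0V: "T0 \<subseteq> V" unfolding T0_def using fF V_in sub by auto
  have c1: "\<And>v. v \<in> V \<Longrightarrow> card (f (V - {v}) \<ominus> T0) = 1"
  proof -
    fix v assume v: "v \<in> V"
    have "card (f (V - {v}) \<ominus> T0) = card ((V - {v}) \<ominus> V)"
      unfolding T0_def using aut_dist[OF f top[OF v] V_in] .
    also have "(V - {v}) \<ominus> V = {v}" using v by (auto simp: sym_diff_def)
    finally show "card (f (V - {v}) \<ominus> T0) = 1" by simp
  qed
  define \<psi> where "\<psi> v = the_elem (f (V - {v}) \<ominus> T0)" for v
  have psi_eq: "\<And>v. v \<in> V \<Longrightarrow> f (V - {v}) \<ominus> T0 = {\<psi> v}"
  proof -
    fix v assume v: "v \<in> V"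
    obtain w where "f (V - {v}) \<ominus> T0 = {w}" by (rule card_1_singletonE[OF c1[OF v]])
    then show "f (V - {v}) \<ominus> T0 = {\<psi> v}" unfolding \<psi>_def by simp
  qed
  have fVv: "\<And>v. v \<in> V \<Longrightarrow> f (V - {v}) = T0 \<ominus> {\<psi> v}"
  proof -
    fix v assume v: "v \<in> V"
    have "f (V - {v}) = T0 \<ominus> (f (V - {v}) \<ominus> T0)" by (rule sd_cancel[symmetric])
    then show "f (V - {v}) = T0 \<ominus> {\<psi> v}" using psi_eq[OF v] by simp
  qed
  have psiV: "\<And>v. v \<in> V \<Longrightarrow> \<psi> v \<in> V"
  proof -
    fix v assume v: "v \<in> V"
    have "f (V - {v}) \<subseteq> V" using fF[OF top[OF v]] sub by auto
    then show "\<psi> v \<in> V" using psi_eq[OF v] T0V by (auto simp: sym_diff_def)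
  qed
  have inj: "inj_on \<psi> V"
  proof (rule inj_onI)
    fix u v assume u: "u \<in> V" and v: "v \<in> V" and e: "\<psi> u = \<psi> v"
    have "f (V - {u}) = f (V - {v})" using fVv[OF u] fVv[OF v] e by simp
    then have "V - {u} = V - {v}"
      by (rule inj_onD[OF bij_betw_imp_inj_on[OF bij] _ top[OF u] top[OF v]])
    then show "u = v" using u v by blast
  qed
  have psiVV: "\<psi> ` V = V" using endo_inj_surj[OF finV _ inj] psiV by auto
  have bpsi: "bij_betw \<psi> V V" using inj psiVV by (simp add: bij_betw_def)
  have key: "\<And>S v. S \<in> F \<Longrightarrow> v \<in> V \<Longrightarrow> \<psi> v \<in> f S \<ominus> T0 \<longleftrightarrow> v \<notin> S"
  proof -
    fix S v assume S: "S \<in> F" and v: "v \<in> V"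
    define D where "D = f S \<ominus> T0"
    have "D \<subseteq> V" unfolding D_def using sub[OF fF[OF S]] T0V by (auto simp: sym_diff_def)
    then have finD: "finite D" using finV by (rule finite_subset)
    have SV: "S \<subseteq> V" using sub S by auto
    have finVS: "finite (V - S)" using finV by auto
    have e1: "card D = card (V - S)"
    proof -
      have "card D = card (S \<ominus> V)" unfolding D_def T0_def using aut_dist[OF f S V_in] .
      also have "S \<ominus> V = V - S" using SV by (auto simp: sym_diff_def)
      finally show ?thesis .
    qed
    have e2: "card (D \<ominus> {\<psi> v}) = card ((V - S) \<ominus> {v})"
    proof -
      have "D \<ominus> {\<psi> v} = f S \<ominus> f (V - {v})" unfolding D_def fVv[OF v]
        by (auto simp: sym_diff_def)
      then have "card (D \<ominus> {\<psi> v}) = card (S \<ominus> (V - {v}))"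
        using aut_dist[OF f S top[OF v]] by simp
      also have "S \<ominus> (V - {v}) = (V - S) \<ominus> {v}" using SV v by (auto simp: sym_diff_def)
      finally show ?thesis .
    qed
    have "\<psi> v \<in> D \<longleftrightarrow> v \<in> V - S"
      using e1 e2 card_sd_single[OF finD, of "\<psi> v"] card_sd_single[OF finVS, of v]
      by (auto split: if_splits)
    then show "\<psi> v \<in> f S \<ominus> T0 \<longleftrightarrow> v \<notin> S" unfolding D_def using v by blast
  qed
  have form: "\<And>S. S \<in> F \<Longrightarrow> f S = \<psi> ` S \<ominus> (V - T0)"
  proof -
    fix S assume S: "S \<in> F"
    have SV: "S \<subseteq> V" using sub S by auto
    have fSV: "f S \<subseteq> V" using sub fF[OF S] by auto
    have D: "f S \<ominus> T0 = \<psi> ` (V - S)"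
    proof
      show "f S \<ominus> T0 \<subseteq> \<psi> ` (V - S)"
      proof
        fix x assume x: "x \<in> f S \<ominus> T0"
        then have "x \<in> V" using fSV T0V by (auto simp: sym_diff_def)
        then obtain v where v: "v \<in> V" "x = \<psi> v" using psiVV by auto
        then show "x \<in> \<psi> ` (V - S)" using key[OF S v(1)] x by auto
      qed
    next
      show "\<psi> ` (V - S) \<subseteq> f S \<ominus> T0" using key[OF S] by auto
    qed
    have im: "\<psi> ` (V - S) = V - \<psi> ` S"
      using inj_on_image_set_diff[OF inj, of V S] SV psiVV by auto
    have psS: "\<psi> ` S \<subseteq> V" using SV psiVV by auto
    have "\<And>x. x \<in> f S \<longleftrightarrow> x \<in> \<psi> ` S \<ominus> (V - T0)"
    proof -
      fix x
      have "x \<in> f S \<longleftrightarrow> (x \<in> T0) \<noteq> (x \<in> V - \<psi> ` S)"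
        using D im by (auto simp: sym_diff_def)
      then show "x \<in> f S \<longleftrightarrow> x \<in> \<psi> ` S \<ominus> (V - T0)"
        using psS T0V fSV by (auto simp: sym_diff_def)
    qed
    then show "f S = \<psi> ` S \<ominus> (V - T0)" by blast
  qed
  show ?thesis using bpsi form by blast
qed

end

lemma sd_invol: "(A \<ominus> R) \<ominus> R = A"
  by (auto simp: sym_diff_def)

context upfam begin

definition minF :: "'a set \<Rightarrow> bool" where
  "minF M \<longleftrightarrow> M \<in> F \<and> (\<forall>T. T \<subset> M \<longrightarrow> T \<notin> F)"

definition irr :: "'a set \<Rightarrow> bool" where
  "irr R \<longleftrightarrow> R \<subseteq> V \<and> (\<forall>v\<in>R. \<forall>M. minF M \<longrightarrow> v \<notin> M)"

lemma exists_min: assumes "S \<in> F" shows "\<exists>M. M \<subseteq> S \<and> minF M"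
proof -
  have "finite S" using fin_mem[OF assms] .
  then show ?thesis using assms
  proof (induction S rule: finite_psubset_induct)
    case (psubset A)
    show ?case
    proof (cases "minF A")
      case True then show ?thesis by blast
    next
      case False
      then obtain T where T: "T \<subset> A" "T \<in> F" using psubset.prems unfolding minF_def by blast
      then obtain M where "M \<subseteq> T" "minF M" using psubset.IH[OF T(1)] by blast
      then show ?thesis using T(1) by blast
    qed
  qed
qed

lemma nu_F: assumes R: "irr R" and S: "S \<in> F" shows "S \<ominus> R \<in> F"
proof -
  obtain M where M: "M \<subseteq> S" "minF M" using exists_min[OF S] by blast
  have MR: "M \<inter> R = {}" using R M(2) unfolding irr_def by blast
  have "M \<in> F" using M(2) unfolding minF_def by blast
  moreover have "M \<subseteq> S \<ominus> R" using M(1) MR by (auto simp: sym_diff_def)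
  moreover have "S \<ominus> R \<subseteq> V" using sub[OF S] R unfolding irr_def by (auto simp: sym_diff_def)
  ultimately show ?thesis by (rule up)
qed

lemma psi_F:
  assumes b: "bij_betw \<psi> V V" and m: "\<And>M. minF M \<Longrightarrow> minF (\<psi> ` M)" and S: "S \<in> F"
  shows "\<psi> ` S \<in> F"
proof -
  obtain M where M: "M \<subseteq> S" "minF M" using exists_min[OF S] by blast
  have "\<psi> ` M \<in> F" using m[OF M(2)] unfolding minF_def by blast
  moreover have "\<psi> ` M \<subseteq> \<psi> ` S" using M(1) by blast
  moreover have "\<psi> ` S \<subseteq> \<psi> ` V" using sub[OF S] by (rule image_mono)
  then have "\<psi> ` S \<subseteq> V" using bij_betw_imp_surj_on[OF b] by simp
  ultimately show ?thesis by (rule up)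
qed

lemma aut_decomp:
  assumes f: "f \<in> TAR_auts F"
  shows "\<exists>\<psi> R. bij_betw \<psi> V V \<and> irr R \<and>
     (\<forall>M. minF M \<longrightarrow> minF (\<psi> ` M) \<and> card (\<psi> ` M) = card M) \<and> (\<forall>S\<in>F. f S = \<psi> ` S \<ominus> R)"
proof -
  obtain \<psi> R where b: "bij_betw \<psi> V V" and RV: "R \<subseteq> V" and form: "\<And>S. S \<in> F \<Longrightarrow> f S = \<psi> ` S \<ominus> R"
    using aut_form[OF f] by blast
  have fB: "f \<in> Bij F" using f unfolding TAR_auts_def by blast
  then have bij: "bij_betw f F F" by (simp add: Bij_def)
  have fF: "\<And>S. S \<in> F \<Longrightarrow> f S \<in> F" by (rule bij_betw_apply[OF bij])
  have fsurj: "\<exists>X\<in>F. f X = Y" if Y: "Y \<in> F" for Y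
  proof -
    have "Y \<in> f ` F" using bij_betw_imp_surj_on[OF bij] Y by simp
    then show ?thesis by blast
  qed
  have inj: "inj_on \<psi> V" using b by (rule bij_betw_imp_inj_on)
  have psiV: "\<psi> ` V = V" using b by (rule bij_betw_imp_surj_on)
  have claim: "S \<in> F" if r: "r \<in> R" and SV: "S \<subseteq> V" and rS: "r \<notin> S" and ins: "insert r S \<in> F" for r S
  proof -
    obtain X where X: "X \<in> F" "f X = insert r S" using fsurj[OF ins] by blast
    have XV: "X \<subseteq> V" using sub[OF X(1)] .
    have eq: "\<psi> ` X = insert r S \<ominus> R"
      using form[OF X(1)] X(2) sd_invol[of "\<psi> ` X" R] by simp
    define Z where "Z = S \<ominus> R"
    have ZV: "Z \<subseteq> V" unfolding Z_def using SV RV by (auto simp: sym_diff_def)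
    have sZ: "\<psi> ` X \<subseteq> Z" unfolding eq Z_def using r by (auto simp: sym_diff_def)
    define X' where "X' = inv_into V \<psi> ` Z"
    have imX': "\<psi> ` X' = Z" unfolding X'_def by (rule image_inv_into_cancel[OF psiV ZV])
    have X'V: "X' \<subseteq> V" unfolding X'_def proof (rule image_subsetI, rule inv_into_into)
      fix x assume "x \<in> Z" then show "x \<in> \<psi> ` V" using ZV psiV by blast
    qed
    have XX': "X \<subseteq> X'"
    proof
      fix x assume x: "x \<in> X"
      then have "\<psi> x \<in> Z" using sZ by blast
      moreover have "inv_into V \<psi> (\<psi> x) = x" using inv_into_f_f[OF inj] x XV by blast
      ultimately show "x \<in> X'" unfolding X'_def by (metis imageI)
    qed
    have X'F: "X' \<in> F" by (rule up[OF X(1) XX' X'V])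
    have "f X' = S" using form[OF X'F] imX' unfolding Z_def by (simp add: sd_invol)
    then show "S \<in> F" using fF[OF X'F] by simp
  qed
  have irrR: "irr R" unfolding irr_def
  proof (intro conjI ballI allI impI)
    show "R \<subseteq> V" by (rule RV)
  next
    fix v M assume v: "v \<in> R" and M: "minF M"
    show "v \<notin> M"
    proof
      assume vM: "v \<in> M"
      have MF: "M \<in> F" using M unfolding minF_def by blast
      have "M - {v} \<in> F"
        by (rule claim[OF v]) (use sub[OF MF] vM MF in \<open>auto simp: insert_absorb\<close>)
      moreover have "M - {v} \<subset> M" using vM by blast
      ultimately show False using M unfolding minF_def by blast
    qed
  qed
  have pF1: "\<psi> ` X \<in> F" if X: "X \<in> F" for X
  proof -
    have "\<psi> ` X = f X \<ominus> R" using form[OF X] sd_invol[of "\<psi> ` X" R] by simp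
    then show ?thesis using nu_F[OF irrR fF[OF X]] by simp
  qed
  have pF2: "X \<in> F" if XV: "X \<subseteq> V" and X: "\<psi> ` X \<in> F" for X
  proof -
    obtain Y where Y: "Y \<in> F" "f Y = \<psi> ` X \<ominus> R" using fsurj[OF nu_F[OF irrR X]] by blast
    have "\<psi> ` Y \<ominus> R = \<psi> ` X \<ominus> R" using form[OF Y(1)] Y(2) by simp
    then have "(\<psi> ` Y \<ominus> R) \<ominus> R = (\<psi> ` X \<ominus> R) \<ominus> R" by simp
    then have "\<psi> ` Y = \<psi> ` X" by (simp add: sd_invol)
    then have "Y = X" using inj_on_image_eq_iff[OF inj sub[OF Y(1)] XV] by simp
    then show ?thesis using Y(1) by simp
  qed
  have mins: "minF (\<psi> ` M) \<and> card (\<psi> ` M) = card M" if M: "minF M" for M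
  proof -
    have MF: "M \<in> F" using M unfolding minF_def by blast
    have MV: "M \<subseteq> V" using sub[OF MF] .
    have "\<psi> ` M \<in> F" by (rule pF1[OF MF])
    moreover have "T \<notin> F" if T: "T \<subset> \<psi> ` M" for T
    proof
      assume TF: "T \<in> F"
      define T' where "T' = inv_into V \<psi> ` T"
      have TV: "T \<subseteq> V" using T MV psiV by blast
      have imT: "\<psi> ` T' = T" unfolding T'_def by (rule image_inv_into_cancel[OF psiV TV])
      have T'V: "T' \<subseteq> V" unfolding T'_def proof (rule image_subsetI, rule inv_into_into)
      fix x assume "x \<in> T" then show "x \<in> \<psi> ` V" using TV psiV by blast
    qed
      have "\<psi> ` T' \<subset> \<psi> ` M" using imT T by simp
      have "T' \<subseteq> inv_into V \<psi> ` (\<psi> ` M)" unfolding T'_def using T by (intro image_mono) blast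
      also have "\<dots> = M" by (rule inv_into_image_cancel[OF inj MV])
      finally have "T' \<subseteq> M" .
      moreover have "T' \<noteq> M" using imT T by blast
      ultimately have "T' \<subset> M" by blast
      moreover have "T' \<in> F" using pF2[OF T'V] imT TF by simp
      ultimately show False using M unfolding minF_def by blast
    qed
    moreover have "card (\<psi> ` M) = card M" using card_image[OF inj_on_subset[OF inj MV]] .
    ultimately show ?thesis unfolding minF_def by blast
  qed
  show ?thesis using b irrR mins form by blast
qed

end

lemma sd_shift: "(S1 \<ominus> R) \<ominus> (S2 \<ominus> R) = S1 \<ominus> S2"
  by (auto simp: sym_diff_def)

lemma restrict_Bij: "bij_betw g W W \<Longrightarrow> (\<lambda>S\<in>W. g S) \<in> Bij W"
  unfolding Bij_def by simp

lemma TAR_autsI: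
  assumes "bij_betw g W W"
    and "\<And>S1 S2. S1 \<in> W \<Longrightarrow> S2 \<in> W \<Longrightarrow> TAR_adj (g S1) (g S2) = TAR_adj S1 S2"
  shows "(\<lambda>S\<in>W. g S) \<in> TAR_auts W"
  unfolding TAR_auts_def using restrict_Bij[OF assms(1)] assms(2) by simp

lemma TAR_auts_subgroup: "subgroup (TAR_auts W) (BijGroup W)"
proof (rule group.subgroupI[OF group_BijGroup])
  show "TAR_auts W \<subseteq> carrier (BijGroup W)"
    unfolding TAR_auts_def BijGroup_def by auto
next
  have "(\<lambda>S\<in>W. S) \<in> TAR_auts W" by (rule TAR_autsI) (auto simp: bij_betw_def)
  then show "TAR_auts W \<noteq> {}" by blast
next
  fix a assume a: "a \<in> TAR_auts W"
  have aB: "a \<in> Bij W" using a unfolding TAR_auts_def by blast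
  then have bij: "bij_betw a W W" by (simp add: Bij_def)
  have adj: "\<And>S1 S2. S1 \<in> W \<Longrightarrow> S2 \<in> W \<Longrightarrow> TAR_adj (a S1) (a S2) = TAR_adj S1 S2"
    using a unfolding TAR_auts_def by blast
  define g where "g = inv_into W a"
  have gW: "\<And>S. S \<in> W \<Longrightarrow> g S \<in> W" unfolding g_def
    by (rule bij_betw_apply[OF bij_betw_inv_into[OF bij]])
  have ag: "\<And>S. S \<in> W \<Longrightarrow> a (g S) = S" unfolding g_def
    by (rule bij_betw_inv_into_right[OF bij])
  have "(\<lambda>S\<in>W. g S) \<in> TAR_auts W"
  proof (rule TAR_autsI)
    show "bij_betw g W W" unfolding g_def by (rule bij_betw_inv_into[OF bij])
  next
    fix S1 S2 assume S: "S1 \<in> W" "S2 \<in> W"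
    have "TAR_adj (a (g S1)) (a (g S2)) = TAR_adj (g S1) (g S2)" by (rule adj[OF gW[OF S(1)] gW[OF S(2)]])
    then show "TAR_adj (g S1) (g S2) = TAR_adj S1 S2" using ag S by simp
  qed
  then show "inv\<^bsub>BijGroup W\<^esub> a \<in> TAR_auts W" unfolding inv_BijGroup[OF aB] g_def .
next
  fix a b assume a: "a \<in> TAR_auts W" and b: "b \<in> TAR_auts W"
  have aB: "a \<in> Bij W" using a unfolding TAR_auts_def by blast
  have bB: "b \<in> Bij W" using b unfolding TAR_auts_def by blast
  have adja: "\<And>S1 S2. S1 \<in> W \<Longrightarrow> S2 \<in> W \<Longrightarrow> TAR_adj (a S1) (a S2) = TAR_adj S1 S2"
    using a unfolding TAR_auts_def by blast
  have adjb: "\<And>S1 S2. S1 \<in> W \<Longrightarrow> S2 \<in> W \<Longrightarrow> TAR_adj (b S1) (b S2) = TAR_adj S1 S2"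
    using b unfolding TAR_auts_def by blast
  have bbij: "bij_betw b W W" using bB by (simp add: Bij_def)
  have bW: "\<And>S. S \<in> W \<Longrightarrow> b S \<in> W" by (rule bij_betw_apply[OF bbij])
  have m: "a \<otimes>\<^bsub>BijGroup W\<^esub> b = compose W a b" using aB bB by (simp add: BijGroup_def)
  have "compose W a b \<in> Bij W" by (rule compose_Bij[OF aB bB])
  moreover have "TAR_adj (compose W a b S1) (compose W a b S2) = TAR_adj S1 S2" if "S1 \<in> W" "S2 \<in> W" for S1 S2
    using that adja[OF bW bW] adjb by (simp add: compose_eq)
  ultimately show "a \<otimes>\<^bsub>BijGroup W\<^esub> b \<in> TAR_auts W" unfolding m TAR_auts_def by blast
qed

context upfam begin

lemma nu_aut: assumes R: "irr R" shows "(\<lambda>S\<in>F. S \<ominus> R) \<in> TAR_auts F"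
proof (rule TAR_autsI)
  show "bij_betw (\<lambda>S. S \<ominus> R) F F"
    by (rule bij_betw_byWitness[where f'="\<lambda>S. S \<ominus> R"]) (use nu_F[OF R] in \<open>auto simp: sd_invol\<close>)
next
  fix S1 S2 show "TAR_adj (S1 \<ominus> R) (S2 \<ominus> R) = TAR_adj S1 S2" by (simp add: TAR_adj_def sd_shift)
qed

lemma psi_aut:
  assumes b: "bij_betw \<psi> V V" and m: "\<And>M. minF M \<Longrightarrow> minF (\<psi> ` M)"
  shows "(\<lambda>S\<in>F. \<psi> ` S) \<in> TAR_auts F"
proof (rule TAR_autsI)
  have inj: "inj_on \<psi> V" using b by (rule bij_betw_imp_inj_on)
  have into: "image \<psi> ` F \<subseteq> F" using psi_F[OF b m] by blast
  have injF: "inj_on (image \<psi>) F"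
    by (rule inj_on_subset[OF inj_on_image_Pow[OF inj]]) (use sub in blast)
  have "image \<psi> ` F = F" by (rule endo_inj_surj[OF finF into injF])
  then show "bij_betw (image \<psi>) F F" using injF by (simp add: bij_betw_def)
  fix S1 S2 assume S: "S1 \<in> F" "S2 \<in> F"
  have V1: "S1 \<subseteq> V" and V2: "S2 \<subseteq> V" using sub S by auto
  have "\<psi> ` S1 \<ominus> \<psi> ` S2 = \<psi> ` (S1 \<ominus> S2)"
    unfolding sym_diff_def image_Un
    using inj_on_image_set_diff[OF inj, of S1 S2] inj_on_image_set_diff[OF inj, of S2 S1] V1 V2 by auto
  moreover have "card (\<psi> ` (S1 \<ominus> S2)) = card (S1 \<ominus> S2)"
    by (rule card_image[OF inj_on_subset[OF inj]]) (use V1 V2 in \<open>auto simp: sym_diff_def\<close>)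
  ultimately show "TAR_adj (\<psi> ` S1) (\<psi> ` S2) = TAR_adj S1 S2" by (simp add: TAR_adj_def)
qed

end

theorem theorem2p18:
  fixes Xs :: "'a set \<Rightarrow> ('a \<Rightarrow> 'a \<Rightarrow> bool) \<Rightarrow> 'a set set"
    and V :: "'a set" and E :: "'a \<Rightarrow> 'a \<Rightarrow> bool"
  assumes "X_set_property Xs"
    and "is_graph V E"
    and "no_isolated V E"
  shows "TAR_auts (Xs V E) = generate (BijGroup (Xs V E)) (TAR_generators Xs V E)"
proof -
  have P: "(\<forall>S \<in> Xs V E. S \<subseteq> V) \<and>
        (\<forall>S T. S \<in> Xs V E \<longrightarrow> S \<subseteq> T \<longrightarrow> T \<subseteq> V \<longrightarrow> T \<in> Xs V E) \<and>
        (no_isolated V E \<longrightarrow> (\<forall>v\<in>V. V - {v} \<in> Xs V E))"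
    using assms(1,2) unfolding X_set_property_def by blast
  have G: "finite V" "V \<noteq> {}" using assms(2) unfolding is_graph_def by blast+
  interpret U: upfam V "Xs V E"
  proof
    show "finite V" "V \<noteq> {}" by (rule G(1), rule G(2))
  next
    fix S assume "S \<in> Xs V E" then show "S \<subseteq> V" using P by blast
  next
    fix S T assume "S \<in> Xs V E" "S \<subseteq> T" "T \<subseteq> V" then show "T \<in> Xs V E" using P by blast
  next
    fix v assume "v \<in> V" then show "V - {v} \<in> Xs V E" using P assms(3) by blast
  qed
  have minEq: "\<And>S. minimal_Xset Xs V E S \<longleftrightarrow> U.minF S"
    by (simp add: minimal_Xset_def U.minF_def)
  have irrEq: "\<And>R. X_irrelevant Xs V E R \<longleftrightarrow> U.irr R"
    by (simp add: X_irrelevant_def U.irr_def minEq)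
  have MEq: "\<And>\<psi>. \<psi> \<in> M_X Xs V E \<longleftrightarrow> bij_betw \<psi> V V \<and> (\<forall>M. U.minF M \<longrightarrow> U.minF (\<psi> ` M) \<and> card (\<psi> ` M) = card M)"
    by (simp add: M_X_def minEq)
  have gsub: "TAR_generators Xs V E \<subseteq> TAR_auts (Xs V E)"
  proof
    fix g assume "g \<in> TAR_generators Xs V E"
    then consider (nu) R where "X_irrelevant Xs V E R" "g = (\<lambda>S\<in>Xs V E. S \<ominus> R)"
      | (psi) \<psi> where "\<psi> \<in> M_X Xs V E" "g = (\<lambda>S\<in>Xs V E. \<psi> ` S)"
      unfolding TAR_generators_def by blast
    then show "g \<in> TAR_auts (Xs V E)"
    proof cases
      case nu then show ?thesis using U.nu_aut irrEq by simp
    next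
      case psi
      then have "bij_betw \<psi> V V" "\<And>M. U.minF M \<Longrightarrow> U.minF (\<psi> ` M)" using MEq by auto
      then show ?thesis using U.psi_aut psi(2) by simp
    qed
  qed
  show ?thesis
  proof
    show "generate (BijGroup (Xs V E)) (TAR_generators Xs V E) \<subseteq> TAR_auts (Xs V E)"
      by (rule group.generate_subgroup_incl[OF group_BijGroup gsub TAR_auts_subgroup])
  next
    show "TAR_auts (Xs V E) \<subseteq> generate (BijGroup (Xs V E)) (TAR_generators Xs V E)"
    proof
      fix f assume f: "f \<in> TAR_auts (Xs V E)"
      obtain \<psi> R where b: "bij_betw \<psi> V V" and R: "U.irr R"
        and mins: "\<forall>M. U.minF M \<longrightarrow> U.minF (\<psi> ` M) \<and> card (\<psi> ` M) = card M"
        and form: "\<forall>S\<in>Xs V E. f S = \<psi> ` S \<ominus> R"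
        using U.aut_decomp[OF f] by blast
      define nu where "nu = (\<lambda>S\<in>Xs V E. S \<ominus> R)"
      define p where "p = (\<lambda>S\<in>Xs V E. \<psi> ` S)"
      have nuG: "nu \<in> TAR_generators Xs V E"
        unfolding TAR_generators_def nu_def using R irrEq by blast
      have pM: "\<psi> \<in> M_X Xs V E" using MEq b mins by blast
      have pG: "p \<in> TAR_generators Xs V E"
        unfolding TAR_generators_def p_def using pM by blast
      have nuB: "nu \<in> Bij (Xs V E)" using U.nu_aut[OF R] unfolding nu_def TAR_auts_def by blast
      have minsF: "\<And>M. U.minF M \<Longrightarrow> U.minF (\<psi> ` M)" using mins by blast
      have pB: "p \<in> Bij (Xs V E)" using U.psi_aut[OF b minsF] unfolding p_def TAR_auts_def by blast
      have fB: "f \<in> Bij (Xs V E)" using f unfolding TAR_auts_def by blast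
      have m: "nu \<otimes>\<^bsub>BijGroup (Xs V E)\<^esub> p = compose (Xs V E) nu p" using nuB pB by (simp add: BijGroup_def)
      have "f = compose (Xs V E) nu p"
      proof (rule extensionalityI[of _ "Xs V E"])
        show "f \<in> extensional (Xs V E)" using fB by (rule Bij_imp_extensional)
        show "compose (Xs V E) nu p \<in> extensional (Xs V E)" by simp
        fix S assume S: "S \<in> Xs V E"
        have "\<psi> ` S \<in> Xs V E" by (rule U.psi_F[OF b minsF S])
        then show "f S = compose (Xs V E) nu p S"
          using S form by (simp add: compose_eq nu_def p_def)
      qed
      then have "f = nu \<otimes>\<^bsub>BijGroup (Xs V E)\<^esub> p" using m by simp
      moreover have "nu \<otimes>\<^bsub>BijGroup (Xs V E)\<^esub> p \<in> generate (BijGroup (Xs V E)) (TAR_generators Xs V E)"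
        by (rule generate.eng[OF generate.incl[OF nuG] generate.incl[OF pG]])
      ultimately show "f \<in> generate (BijGroup (Xs V E)) (TAR_generators Xs V E)" by simp
    qed
  qed
qed

end
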